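(* Let $\Gamma$ be a group acting quasi-transitively on a tree $T$ with infinitely many ends, such that the action stabilizes an end of $T$. Then the action of $\Gamma$ on $T$ is not free.
   Context: An action on $T$ is quasi-transitive if $V(T)$ has finitely many orbits. Ends of $T$ are equivalence classes of rays (infinite one-way paths), two rays being equivalent if there are infinitely many disjoint paths between them; $\Gamma$ stabilizes an end if every element maps rays of that end to rays of that end. The action is free if the only element of $\Gamma$ fixing some vertex of $T$ is the identity. *)

theory Defs
  imports "HOL-Algebra.Group_Action"
begin

definition is_walk :: "('v \<times> 'v) set \<Rightarrow> 'v list \<Rightarrow> bool" where
  "is_walk E p \<longleftrightarrow> p \<noteq> [] \<and> (\<forall>i. Suc i < length p \<longrightarrow> (p ! i, p ! Suc i) \<in> E)"

definition is_path :: "('v \<times> 'v) set \<Rightarrow> 'v list \<Rightarrow> bool" where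
  "is_path E p \<longleftrightarrow> is_walk E p \<and> distinct p"

definition is_cycle :: "('v \<times> 'v) set \<Rightarrow> 'v list \<Rightarrow> bool" where
  "is_cycle E c \<longleftrightarrow> length c \<ge> 3 \<and> is_path E c \<and> (last c, hd c) \<in> E"

definition is_tree :: "'v set \<Rightarrow> ('v \<times> 'v) set \<Rightarrow> bool" where
  "is_tree V E \<longleftrightarrow>
     V \<noteq> {} \<and>
     E \<subseteq> V \<times> V \<and> sym E \<and> irrefl E \<and>
     (\<forall>x\<in>V. \<forall>y\<in>V. \<exists>p. is_path E p \<and> hd p = x \<and> last p = y) \<and>
     (\<nexists>c. is_cycle E c)"

definition is_ray :: "('v \<times> 'v) set \<Rightarrow> (nat \<Rightarrow> 'v) \<Rightarrow> bool" where
  "is_ray E r \<longleftrightarrow> inj r \<and> (\<forall>i. (r i, r (Suc i)) \<in> E)"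

definition ray_equiv :: "('v \<times> 'v) set \<Rightarrow> (nat \<Rightarrow> 'v) \<Rightarrow> (nat \<Rightarrow> 'v) \<Rightarrow> bool" where
  "ray_equiv E r s \<longleftrightarrow>
     (\<exists>P. infinite P \<and>
          (\<forall>p\<in>P. is_path E p \<and> hd p \<in> range r \<and> last p \<in> range s) \<and>
          (\<forall>p\<in>P. \<forall>q\<in>P. p \<noteq> q \<longrightarrow> set p \<inter> set q = {}))"

definition end_of :: "('v \<times> 'v) set \<Rightarrow> (nat \<Rightarrow> 'v) \<Rightarrow> (nat \<Rightarrow> 'v) set" where
  "end_of E r = {s. is_ray E s \<and> ray_equiv E r s}"

definition ends :: "('v \<times> 'v) set \<Rightarrow> (nat \<Rightarrow> 'v) set set" where
  "ends E = {end_of E r | r. is_ray E r}"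

definition tree_action :: "('g, 'b) monoid_scheme \<Rightarrow> 'v set \<Rightarrow> ('v \<times> 'v) set \<Rightarrow> ('g \<Rightarrow> 'v \<Rightarrow> 'v) \<Rightarrow> bool" where
  "tree_action G V E \<phi> \<longleftrightarrow> is_tree V E \<and> group_action G V \<phi> \<and>
     (\<forall>g\<in>carrier G. \<forall>x\<in>V. \<forall>y\<in>V. (x, y) \<in> E \<longleftrightarrow> (\<phi> g x, \<phi> g y) \<in> E)"

definition quasi_transitive :: "('g, 'b) monoid_scheme \<Rightarrow> 'v set \<Rightarrow> ('g \<Rightarrow> 'v \<Rightarrow> 'v) \<Rightarrow> bool" where
  "quasi_transitive G V \<phi> \<longleftrightarrow> finite (orbits G V \<phi>)"

definition stabilizes_an_end :: "('g, 'b) monoid_scheme \<Rightarrow> ('v \<times> 'v) set \<Rightarrow> ('g \<Rightarrow> 'v \<Rightarrow> 'v) \<Rightarrow> bool" where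
  "stabilizes_an_end G E \<phi> \<longleftrightarrow>
     (\<exists>\<omega>\<in>ends E. \<forall>g\<in>carrier G. \<forall>r\<in>\<omega>. (\<phi> g \<circ> r) \<in> \<omega>)"

definition free_action :: "('g, 'b) monoid_scheme \<Rightarrow> 'v set \<Rightarrow> ('g \<Rightarrow> 'v \<Rightarrow> 'v) \<Rightarrow> bool" where
  "free_action G V \<phi> \<longleftrightarrow> (\<forall>g\<in>carrier G. \<forall>v\<in>V. \<phi> g v = v \<longrightarrow> g = \<one>\<^bsub>G\<^esub>)"

end

theory Submission imports Defs begin

lemma is_walk_single[simp]: "is_walk E [x]"
  by (simp add: is_walk_def)

lemma is_walk_Cons2: "is_walk E (x # y # xs) \<longleftrightarrow> (x,y) \<in> E \<and> is_walk E (y # xs)"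
proof
  assume h: "is_walk E (x # y # xs)"
  have "((x # y # xs) ! 0, (x # y # xs) ! Suc 0) \<in> E"
    using h[unfolded is_walk_def, THEN conjunct2, rule_format, of 0] by simp
  then have "(x,y) \<in> E" by simp
  moreover have "is_walk E (y # xs)" unfolding is_walk_def
  proof (intro conjI allI impI)
    fix i assume "Suc i < length (y # xs)"
    then have "Suc (Suc i) < length (x # y # xs)" by simp
    then have "((x # y # xs) ! Suc i, (x # y # xs) ! Suc (Suc i)) \<in> E" using h unfolding is_walk_def
      by blast
    then show "((y # xs) ! i, (y # xs) ! Suc i) \<in> E" by simp
  qed simp
  ultimately show "(x,y) \<in> E \<and> is_walk E (y # xs)" by simp
next
  assume h: "(x,y) \<in> E \<and> is_walk E (y # xs)"
  show "is_walk E (x # y # xs)" unfolding is_walk_def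
  proof (intro conjI allI impI)
    fix i assume i: "Suc i < length (x # y # xs)"
    show "((x # y # xs) ! i, (x # y # xs) ! Suc i) \<in> E"
    proof (cases i)
      case 0 then show ?thesis using h by simp
    next
      case (Suc k)
      then have "Suc k < length (y # xs)" using i by simp
      then show ?thesis using h Suc unfolding is_walk_def by simp
    qed
  qed simp
qed


lemma is_walk_Cons_iff: "is_walk E (x # xs) \<longleftrightarrow> (xs = [] \<or> ((x, hd xs) \<in> E \<and> is_walk E xs))"
  by (cases xs) (simp_all add: is_walk_Cons2)

lemma is_walk_append:
  assumes "xs \<noteq> []" "ys \<noteq> []"
  shows "is_walk E (xs @ ys) \<longleftrightarrow> is_walk E xs \<and> is_walk E ys \<and> (last xs, hd ys) \<in> E"
  using assms
proof (induction xs)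
  case Nil then show ?case by simp
next
  case (Cons a xs)
  show ?case
  proof (cases "xs = []")
    case True
    obtain b ys' where "ys = b # ys'" using Cons.prems by (cases ys) auto
    then show ?thesis using True by (auto simp: is_walk_Cons2)
  next
    case False
    then obtain b xs' where xs: "xs = b # xs'" by (cases xs) auto
    have "is_walk E ((a # xs) @ ys) \<longleftrightarrow> (a, b) \<in> E \<and> is_walk E (xs @ ys)"
      unfolding xs by (simp only: append_Cons is_walk_Cons2)
    also have "\<dots> \<longleftrightarrow> (a, b) \<in> E \<and> is_walk E xs \<and> is_walk E ys \<and> (last xs, hd ys) \<in> E"
      using Cons.IH[OF False Cons.prems(2)] by simp
    also have "\<dots> \<longleftrightarrow> is_walk E (a # xs) \<and> is_walk E ys \<and> (last (a # xs), hd ys) \<in> E"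
      unfolding xs by (simp add: is_walk_Cons2)
    finally show ?thesis .
  qed
qed
lemma is_walk_nonempty: "is_walk E xs \<Longrightarrow> xs \<noteq> []"
  by (simp add: is_walk_def)

lemma is_walk_rev:
  assumes "sym E" "is_walk E xs" shows "is_walk E (rev xs)"
  using assms(2)
proof (induction xs)
  case Nil then show ?case by (simp add: is_walk_def)
next
  case (Cons a xs)
  show ?case
  proof (cases "xs = []")
    case True then show ?thesis by simp
  next
    case False
    then have h: "(a, hd xs) \<in> E" "is_walk E xs" using Cons.prems by (auto simp: is_walk_Cons_iff)
    then have "is_walk E (rev xs)" using Cons.IH by simp
    moreover have "(last (rev xs), hd [a]) \<in> E" using h assms(1) False
      by (simp add: last_rev sym_def)
    ultimately show ?thesis using False by (simp add: is_walk_append)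
  qed
qed

lemma is_walk_take:
  assumes "is_walk E xs" "n > 0" shows "is_walk E (take n xs)"
  using assms unfolding is_walk_def by auto

lemma is_walk_drop:
  assumes "is_walk E xs" "n < length xs" shows "is_walk E (drop n xs)"
  using assms unfolding is_walk_def by auto

lemma distinct_hd_last:
  assumes "distinct Q" "Q \<noteq> []" "hd Q = last Q" shows "Q = [hd Q]"
proof (cases Q)
  case Nil then show ?thesis using assms by simp
next
  case (Cons a Q')
  then show ?thesis using assms by (cases Q' rule: rev_cases) auto
qed

locale acyclic_graph =
  fixes E :: "('v \<times> 'v) set"
  assumes symE: "sym E" and irrE: "irrefl E" and nocyc: "\<nexists>c. is_cycle E c"
begin

lemma edge_sym: "(x,y) \<in> E \<Longrightarrow> (y,x) \<in> E"
  using symE by (meson symD)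

lemma unique_path:
  assumes "is_path E P" "is_path E Q" "hd P = hd Q" "last P = last Q"
  shows "P = Q"
  using assms
proof (induction P arbitrary: Q)
  case Nil then show ?case by (simp add: is_path_def is_walk_def)
next
  case (Cons x P')
  obtain Q' where Q: "Q = x # Q'" using Cons.prems
    by (cases Q) (auto simp: is_path_def dest: is_walk_nonempty)
  show ?case
  proof (cases "P' = []")
    case True
    then have "last Q = hd Q" using Cons.prems Q by simp
    moreover have "distinct Q" using Cons.prems(2) by (simp add: is_path_def)
    ultimately have "Q = [hd Q]" using distinct_hd_last[of Q] Q by simp
    then have "Q' = []" using Q by (metis list.inject)
    then show ?thesis using Q True by simp
  next
    case P'ne: False
    show ?thesis
    proof (cases "Q' = []")
      case True
      then have "last P' = x" using Cons.prems Q P'ne by simp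
      then have "x \<in> set P'" using P'ne last_in_set by metis
      then show ?thesis using Cons.prems(1) by (simp add: is_path_def)
    next
      case Q'ne: False
      have wP: "is_walk E P'" "(x, hd P') \<in> E" "distinct P'" "x \<notin> set P'"
        using Cons.prems(1) P'ne by (auto simp: is_path_def is_walk_Cons_iff)
      have wQ: "is_walk E Q'" "(x, hd Q') \<in> E" "distinct Q'" "x \<notin> set Q'"
        using Cons.prems(2) Q Q'ne by (auto simp: is_path_def is_walk_Cons_iff)
      have lastPQ: "last P' = last Q'" using Cons.prems Q P'ne Q'ne by simp
      show ?thesis
      proof (cases "hd P' = hd Q'")
        case True
        have "P' = Q'"
          by (rule Cons.IH) (use True wP wQ lastPQ in \<open>simp_all add: is_path_def\<close>)
        then show ?thesis using Q by simp
      next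
        case hdne: False
        define i where "i = (LEAST i. i < length P' \<and> P' ! i \<in> set Q')"
        have ex: "length P' - 1 < length P' \<and> P' ! (length P' - 1) \<in> set Q'"
          using P'ne Q'ne lastPQ by (simp add: last_conv_nth)
        have i: "i < length P'" "P' ! i \<in> set Q'"
          using LeastI[of "\<lambda>i. i < length P' \<and> P' ! i \<in> set Q'", OF ex] unfolding i_def by auto
        have imin: "\<And>a. a < i \<Longrightarrow> P' ! a \<notin> set Q'"
          using i(1) not_less_Least unfolding i_def by (metis dual_order.strict_trans)
        obtain j where j: "j < length Q'" "Q' ! j = P' ! i" using i(2) by (metis in_set_conv_nth)
        define A where "A = x # take (Suc i) P'"
        define B where "B = rev (take j Q')"
        define c where "c = A @ B"
        have "i + j \<ge> 1"
        proof (rule ccontr)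
          assume "\<not> ?thesis" then have "i = 0" "j = 0" by auto
          then show False using j hdne P'ne Q'ne by (simp add: hd_conv_nth)
        qed
        have lenc: "length c = 2 + i + j" using i j unfolding c_def A_def B_def by simp
        have wA: "is_walk E A" unfolding A_def
          using is_walk_take[OF Cons.prems(1)[unfolded is_path_def, THEN conjunct1], of "Suc (Suc i)"]
          by simp
        have lastA: "last A = P' ! i" unfolding A_def using i(1)
          by (simp add: take_Suc_conv_app_nth)
        have setA: "set A = insert x (set (take (Suc i) P'))" unfolding A_def by simp
        have distA: "distinct A" unfolding A_def using wP set_take_subset[of "Suc i" P']
          by auto
        have distB: "distinct B" unfolding B_def using wQ by simp
        have setB: "set B \<subseteq> set Q'" unfolding B_def by (simp add: set_take_subset)
        have disjAB: "set A \<inter> set B = {}"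
        proof -
          have "x \<notin> set B" using setB wQ(4) by blast
          moreover have "y \<notin> set B" if yin: "y \<in> set (take (Suc i) P')" for y
          proof -
            obtain a where a0: "a < length (take (Suc i) P')" "take (Suc i) P' ! a = y"
              using yin unfolding in_set_conv_nth by blast
            then have a: "a < Suc i" "a < length P'" "y = P' ! a" by auto
            show ?thesis
            proof (cases "a < i")
              case True then show ?thesis using imin[of a] a setB by blast
            next
              case False
              then have "a = i" using a by simp
              then have "y = Q' ! j" using a j by simp
              moreover have "distinct (take (Suc j) Q')" using wQ(3) by simp
              then have "Q' ! j \<notin> set (take j Q')"
                unfolding take_Suc_conv_app_nth[OF j(1)] by simp
              ultimately show ?thesis unfolding B_def by simp
            qed
          qed
          ultimately show ?thesis using setA by auto
        qed
        have distc: "distinct c" unfolding c_def using distA distB disjAB by simp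
        have wc: "is_walk E c \<and> (last c, hd c) \<in> E"
        proof (cases "j = 0")
          case True
          then have "c = A" unfolding c_def B_def by simp
          moreover have "last A = hd Q'" using lastA j True Q'ne by (simp add: hd_conv_nth)
          moreover have "(hd Q', x) \<in> E" using wQ(2) by (rule edge_sym)
          ultimately show ?thesis using wA unfolding A_def by simp
        next
          case False
          have wB: "is_walk E B" unfolding B_def
            by (rule is_walk_rev[OF symE is_walk_take[OF wQ(1)]]) (use False in simp)
          have "B \<noteq> []" using False Q'ne unfolding B_def by simp
          have jm: "j - 1 < length Q'" "Suc (j - 1) = j" using j(1) False by auto
          have tk: "take j Q' = take (j-1) Q' @ [Q'!(j-1)]"
            using take_Suc_conv_app_nth[OF jm(1)] jm(2) by simp
          have hdB: "hd B = Q' ! (j - 1)" unfolding B_def tk by simp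
          have "(Q' ! (j-1), Q' ! Suc (j-1)) \<in> E"
            using wQ(1)[unfolded is_walk_def, THEN conjunct2, rule_format, of "j-1"] jm j(1) by simp
          then have "(Q' ! (j-1), Q' ! j) \<in> E" using jm(2) by simp
          then have "(Q' ! j, Q' ! (j-1)) \<in> E" by (rule edge_sym)
          then have junction: "(last A, hd B) \<in> E" using lastA hdB j(2) by simp
          have "last c = hd Q'" unfolding c_def B_def using False Q'ne
            by (cases Q') (auto simp: last_rev)
          moreover have "(hd Q', x) \<in> E" using wQ(2) by (rule edge_sym)
          ultimately have "(last c, hd c) \<in> E" unfolding c_def A_def by simp
          moreover have "A \<noteq> []" unfolding A_def by simp
          ultimately show ?thesis using wA wB junction \<open>B \<noteq> []\<close> is_walk_append[of A B E]
            unfolding c_def by simp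
        qed
        have "is_cycle E c" unfolding is_cycle_def is_path_def
          using lenc \<open>i + j \<ge> 1\<close> distc wc by simp
        then show ?thesis using nocyc by blast
      qed
    qed
  qed
qed

end

definition TS :: "(nat \<Rightarrow> 'v) \<Rightarrow> (nat \<Rightarrow> 'v) \<Rightarrow> bool" where
  "TS s t \<longleftrightarrow> (\<exists>a b. \<forall>i. s (a + i) = t (b + i))"

lemma TS_refl: "TS s s"
  unfolding TS_def by (rule exI[of _ 0], rule exI[of _ 0]) simp

lemma TS_sym: "TS s t \<Longrightarrow> TS t s"
  unfolding TS_def by (metis)

lemma TS_trans: assumes "TS s t" "TS t u" shows "TS s u"
proof -
  obtain a b where ab: "\<And>i. s (a + i) = t (b + i)" using assms(1) unfolding TS_def by blast
  obtain c d where cd: "\<And>i. t (c + i) = u (d + i)" using assms(2) unfolding TS_def by blast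
  have "s (a + c + i) = u (d + b + i)" for i
  proof -
    have "s (a + c + i) = s (a + (c + i))" by (simp add: add.assoc)
    also have "\<dots> = t (b + (c + i))" by (rule ab)
    also have "\<dots> = t (c + (b + i))" by (simp add: algebra_simps)
    also have "\<dots> = u (d + (b + i))" by (rule cd)
    finally show ?thesis by (simp add: add.assoc)
  qed
  then show ?thesis unfolding TS_def by blast
qed

lemma TS_shift: assumes "TS s t" shows "TS (\<lambda>i. s (Suc i)) t"
proof -
  obtain a b where ab: "\<And>i. s (a + i) = t (b + i)" using assms(1) unfolding TS_def by blast
  have "s (Suc (a + i)) = t (Suc b + i)" for i using ab[of "Suc i"] by simp
  then show ?thesis unfolding TS_def by blast
qed

lemma TS_map: assumes "TS s t" shows "TS (f \<circ> s) (f \<circ> t)"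
  using assms unfolding TS_def by (metis comp_apply)

lemma ray_path_seg:
  assumes "is_ray E s" "m < n"
  shows "is_path E (map s [m..<n])"
proof -
  have "is_walk E (map s [m..<n])" unfolding is_walk_def
  proof (intro conjI allI impI)
    show "map s [m..<n] \<noteq> []" using assms(2) by simp
    fix i assume "Suc i < length (map s [m..<n])"
    then have "Suc i < n - m" by simp
    then show "(map s [m..<n] ! i, map s [m..<n] ! Suc i) \<in> E"
      using assms(1) unfolding is_ray_def by simp
  qed
  moreover have "distinct (map s [m..<n])"
    using assms(1) unfolding is_ray_def by (simp add: distinct_map inj_on_def inj_def)
  ultimately show ?thesis unfolding is_path_def by simp
qed

locale tree_end = acyclic_graph E for E :: "('v \<times> 'v) set" +
  fixes V :: "'v set" and r0 :: "nat \<Rightarrow> 'v"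
  assumes EV: "E \<subseteq> V \<times> V"
    and conn: "\<forall>x\<in>V. \<forall>y\<in>V. \<exists>p. is_path E p \<and> hd p = x \<and> last p = y"
    and r0: "is_ray E r0"
begin

lemma ray_V: "is_ray E s \<Longrightarrow> s i \<in> V"
  using EV unfolding is_ray_def by blast

lemma edge_V: "(x, y) \<in> E \<Longrightarrow> x \<in> V \<and> y \<in> V"
  using EV by blast

lemma ray_unique:
  assumes s: "is_ray E s" and t: "is_ray E t" and st0: "s 0 = t 0" and "TS s t"
  shows "s = t"
proof
  fix n
  obtain a b where ab: "\<And>i. s (a + i) = t (b + i)" using assms(4) unfolding TS_def by blast
  have "map s [0..<a+n+1] = map t [0..<b+n+1]"
  proof (rule unique_path)
    show "is_path E (map s [0..<a+n+1])" by (rule ray_path_seg[OF s]) simp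
    show "is_path E (map t [0..<b+n+1])" by (rule ray_path_seg[OF t]) simp
    show "hd (map s [0..<a+n+1]) = hd (map t [0..<b+n+1])" using st0 by (simp add: upt_conv_Cons del: upt_Suc)
    show "last (map s [0..<a+n+1]) = last (map t [0..<b+n+1])" using ab[of n] by simp
  qed
  then have "map s [0..<a+n+1] ! n = map t [0..<b+n+1] ! n" by simp
  then show "s n = t n" by (simp del: upt_Suc)
qed

lemma sr_ex:
  assumes v: "v \<in> V"
  shows "\<exists>s. is_ray E s \<and> s 0 = v \<and> TS s r0"
proof -
  have "r0 0 \<in> V" using ray_V[OF r0] .
  then obtain Q where Q: "is_path E Q" "hd Q = v" "last Q = r0 0" using conn v by blast
  have Qne: "Q \<noteq> []" using Q(1) by (simp add: is_path_def is_walk_def)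
  define j where "j = (LEAST j. j < length Q \<and> Q ! j \<in> range r0)"
  have ex: "length Q - 1 < length Q \<and> Q ! (length Q - 1) \<in> range r0"
  proof -
    have "Q ! (length Q - 1) = r0 0" using Q(3) last_conv_nth[OF Qne] by simp
    then show ?thesis using Qne by simp
  qed
  have j: "j < length Q" "Q ! j \<in> range r0"
    using LeastI[of "\<lambda>j. j < length Q \<and> Q ! j \<in> range r0", OF ex] unfolding j_def by auto
  have jmin: "\<And>a. a < j \<Longrightarrow> Q ! a \<notin> range r0"
  proof -
    fix a assume "a < j"
    then have "\<not> (a < length Q \<and> Q ! a \<in> range r0)" unfolding j_def by (rule not_less_Least)
    then show "Q ! a \<notin> range r0" using \<open>a < j\<close> j(1) by simp
  qed
  obtain c where c: "Q ! j = r0 c" using j(2) by blast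
  define s where "s i = (if i < j then Q ! i else r0 (c + (i - j)))" for i
  have s_ray: "is_ray E s" unfolding is_ray_def
  proof
    show "inj s"
    proof (rule injI)
      fix x y assume eq: "s x = s y"
      have dQ: "distinct Q" using Q(1) by (simp add: is_path_def)
      have ir: "inj r0" using r0 by (simp add: is_ray_def)
      show "x = y"
      proof (cases "x < j")
        case True
        show ?thesis
        proof (cases "y < j")
          case True
          then have "Q ! x = Q ! y" using eq \<open>x < j\<close> by (simp add: s_def)
          then show ?thesis using dQ \<open>x < j\<close> True j(1) by (simp add: nth_eq_iff_index_eq)
        next
          case False
          then have "Q ! x = r0 (c + (y - j))" using eq \<open>x < j\<close> by (simp add: s_def)
          then show ?thesis using jmin[OF \<open>x < j\<close>] by simp
        qed
      next
        case False
        show ?thesis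
        proof (cases "y < j")
          case True
          then have "Q ! y = r0 (c + (x - j))" using eq \<open>\<not> x < j\<close> by (simp add: s_def)
          then show ?thesis using jmin[OF True] by simp
        next
          case False
          then have "r0 (c + (x - j)) = r0 (c + (y - j))" using eq \<open>\<not> x < j\<close> by (simp add: s_def)
          then have "c + (x - j) = c + (y - j)" by (rule injD[OF ir])
          then show ?thesis using False \<open>\<not> x < j\<close> by simp
        qed
      qed
    qed
    show "\<forall>i. (s i, s (Suc i)) \<in> E"
    proof
      fix i
      show "(s i, s (Suc i)) \<in> E"
      proof (cases "Suc i < j")
        case True
        then have "(Q ! i, Q ! Suc i) \<in> E"
          using Q(1) j(1) unfolding is_path_def is_walk_def by simp
        then show ?thesis using True by (simp add: s_def)
      next
        case False
        show ?thesis
        proof (cases "Suc i = j")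
          case True
          then have "Suc i < length Q" using j(1) by simp
          then have "(Q ! i, Q ! Suc i) \<in> E"
            using Q(1) unfolding is_path_def is_walk_def by blast
          then show ?thesis using True c by (simp add: s_def)
        next
          case False
          then have "j \<le> i" using \<open>\<not> Suc i < j\<close> by simp
          then have "(r0 (c + (i - j)), r0 (Suc (c + (i - j)))) \<in> E"
            using r0 unfolding is_ray_def by blast
          moreover have "Suc (c + (i - j)) = c + (Suc i - j)" using \<open>j \<le> i\<close> by simp
          ultimately show ?thesis using \<open>j \<le> i\<close> by (simp add: s_def)
        qed
      qed
    qed
  qed
  have "s 0 = v"
  proof (cases "0 < j")
    case True then show ?thesis using Q(2) Qne by (simp add: s_def hd_conv_nth)
  next
    case False
    then have "j = 0" by simp
    then show ?thesis using Q(2) Qne c by (simp add: s_def hd_conv_nth)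
  qed
  moreover have "TS s r0" unfolding TS_def
    by (rule exI[of _ j], rule exI[of _ c]) (simp add: s_def)
  ultimately show ?thesis using s_ray by blast
qed

definition sr :: "'v \<Rightarrow> nat \<Rightarrow> 'v" where
  "sr v = (SOME s. is_ray E s \<and> s 0 = v \<and> TS s r0)"

definition p :: "'v \<Rightarrow> 'v" where
  "p v = sr v 1"

lemma sr: assumes "v \<in> V" shows "is_ray E (sr v)" "sr v 0 = v" "TS (sr v) r0"
  using someI_ex[OF sr_ex[OF assms]] unfolding sr_def by auto

lemma sr_eq:
  assumes "v \<in> V" "is_ray E s" "s 0 = v" "TS s r0"
  shows "sr v = s"
proof (rule ray_unique[OF sr(1)[OF assms(1)] assms(2)])
  show "sr v 0 = s 0" using sr(2)[OF assms(1)] assms(3) by simp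
  show "TS (sr v) s" using TS_trans[OF sr(3)[OF assms(1)] TS_sym[OF assms(4)]] .
qed

lemma sr_V: "v \<in> V \<Longrightarrow> sr v i \<in> V"
  using ray_V[OF sr(1)] by blast

lemma p_V: "v \<in> V \<Longrightarrow> p v \<in> V"
  unfolding p_def by (rule sr_V)

lemma p_edge: "v \<in> V \<Longrightarrow> (v, p v) \<in> E"
  using sr[of v] unfolding p_def is_ray_def by (metis One_nat_def)

lemma sr_p: assumes "v \<in> V" shows "sr (p v) = (\<lambda>i. sr v (Suc i))"
proof (rule sr_eq)
  show "p v \<in> V" using p_V[OF assms] .
  show "is_ray E (\<lambda>i. sr v (Suc i))"
    using sr(1)[OF assms] unfolding is_ray_def inj_def by auto
  show "sr v (Suc 0) = p v" unfolding p_def by simp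
  show "TS (\<lambda>i. sr v (Suc i)) r0" using TS_shift[OF sr(3)[OF assms]] .
qed

lemma p_pow: "v \<in> V \<Longrightarrow> (p ^^ n) v = sr v n"
proof (induction n arbitrary: v)
  case 0 then show ?case using sr(2)[OF 0] by simp
next
  case (Suc n)
  have "(p ^^ Suc n) v = (p ^^ n) (p v)" by (simp add: funpow_Suc_right del: funpow.simps)
  also have "\<dots> = sr (p v) n" using Suc.IH[OF p_V[OF Suc.prems]] .
  also have "\<dots> = sr v (Suc n)" using sr_p[OF Suc.prems] by simp
  finally show ?case .
qed

lemma pow_V: "v \<in> V \<Longrightarrow> (p ^^ n) v \<in> V"
  using p_pow sr_V by simp

lemma pow_inj: assumes "v \<in> V" "(p ^^ m) v = (p ^^ n) v" shows "m = n"
proof -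
  have "sr v m = sr v n" using assms p_pow by simp
  then show ?thesis using sr(1)[OF assms(1)] unfolding is_ray_def by (simp add: inj_eq)
qed

lemma common_anc: assumes "x \<in> V" "y \<in> V" shows "\<exists>a b. (p ^^ a) x = (p ^^ b) y"
proof -
  obtain a c where ac: "\<And>i. sr x (a + i) = r0 (c + i)" using sr(3)[OF assms(1)] unfolding TS_def by blast
  obtain b d where bd: "\<And>i. sr y (b + i) = r0 (d + i)" using sr(3)[OF assms(2)] unfolding TS_def by blast
  have "sr x (a + d) = sr y (b + c)" using ac[of d] bd[of c] by (simp add: add.commute)
  then show ?thesis using p_pow assms by metis
qed

lemma edge_parent:
  assumes xy: "(x, y) \<in> E" shows "y = p x \<or> x = p y"
proof (cases "y = p x")
  case True then show ?thesis by simp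
next
  case ne: False
  have xV: "x \<in> V" and yV: "y \<in> V" using edge_V[OF xy] by auto
  let ?s = "sr x"
  have s: "is_ray E ?s" "?s 0 = x" "TS ?s r0" using sr[OF xV] by auto
  have "x = p y"
  proof (cases "y \<in> range ?s")
    case True
    then obtain j where j: "y = ?s j" by blast
    have "j \<noteq> 0"
    proof
      assume "j = 0" then have "y = x" using j s(2) by simp
      then show False using xy irrE by (simp add: irrefl_def)
    qed
    moreover have "j \<noteq> 1"
    proof
      assume "j = 1" then show False using j ne unfolding p_def by simp
    qed
    ultimately have j2: "j \<ge> 2" by simp
    have "is_cycle E (map ?s [0..<Suc j])" unfolding is_cycle_def
    proof (intro conjI)
      show "3 \<le> length (map ?s [0..<Suc j])" using j2 by simp
      show "is_path E (map ?s [0..<Suc j])" by (rule ray_path_seg[OF s(1)]) simp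
      have "(y, x) \<in> E" using xy by (rule edge_sym)
      moreover have "last (map ?s [0..<Suc j]) = ?s j" by simp
      moreover have "hd (map ?s [0..<Suc j]) = ?s 0" by (simp add: upt_conv_Cons del: upt_Suc)
      ultimately show "(last (map ?s [0..<Suc j]), hd (map ?s [0..<Suc j])) \<in> E"
        using j s(2) by simp
    qed
    then show ?thesis using nocyc by blast
  next
    case False
    define t where "t i = (if i = 0 then y else ?s (i - 1))" for i
    have t_ray: "is_ray E t" unfolding is_ray_def
    proof
      show "inj t"
      proof (rule injI)
        fix a b assume "t a = t b"
        then show "a = b" using False s(1) unfolding t_def is_ray_def
          by (cases "a = 0"; cases "b = 0") (auto simp: inj_eq)
      qed
      show "\<forall>i. (t i, t (Suc i)) \<in> E"
      proof
        fix i show "(t i, t (Suc i)) \<in> E"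
        proof (cases i)
          case 0
          have "(y, x) \<in> E" using xy by (rule edge_sym)
          then show ?thesis using 0 s(2) by (simp add: t_def)
        next
          case (Suc k) then show ?thesis using s(1) unfolding is_ray_def by (simp add: t_def)
        qed
      qed
    qed
    have "TS t ?s" unfolding TS_def
      by (rule exI[of _ 1], rule exI[of _ 0]) (simp add: t_def)
    then have "TS t r0" using s(3) by (rule TS_trans)
    then have "sr y = t" using sr_eq[OF yV t_ray] by (simp add: t_def)
    then show "x = p y" unfolding p_def using s(2) by (simp add: t_def)
  qed
  then show ?thesis by simp
qed

lemma r0_up: "(p ^^ n) (r0 0) = r0 n"
proof -
  have "sr (r0 0) = r0" using sr_eq[OF ray_V[OF r0] r0 refl TS_refl] .
  then show ?thesis using p_pow[OF ray_V[OF r0]] by simp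
qed


definition up_ray :: "(nat \<Rightarrow> 'v) \<Rightarrow> bool" where
  "up_ray s \<longleftrightarrow> (\<forall>i. s (Suc i) = p (s i))"

definition down_from :: "(nat \<Rightarrow> 'v) \<Rightarrow> nat \<Rightarrow> bool" where
  "down_from s N \<longleftrightarrow> (\<forall>M\<ge>N. p (s (Suc M)) = s M)"

definition Dset :: "'v \<Rightarrow> 'v set" where
  "Dset v = {x. \<exists>n. (p ^^ n) x = v}"

lemma ray_up_or_down:
  assumes s: "is_ray E s" shows "up_ray s \<or> (\<exists>N. down_from s N)"
proof (cases "up_ray s")
  case True then show ?thesis by simp
next
  case False
  then obtain N where N: "s (Suc N) \<noteq> p (s N)" unfolding up_ray_def by blast
  have e: "(s N, s (Suc N)) \<in> E" using s unfolding is_ray_def by blast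
  have base: "p (s (Suc N)) = s N" using edge_parent[OF e] N by auto
  have "p (s (Suc M)) = s M" if "N \<le> M" for M
    using that
  proof (induction M rule: dec_induct)
    case base then show ?case using \<open>p (s (Suc N)) = s N\<close> by simp
  next
    case (step M)
    have e2: "(s (Suc M), s (Suc (Suc M))) \<in> E" using s unfolding is_ray_def by blast
    have "s (Suc (Suc M)) \<noteq> s M"
    proof
      assume "s (Suc (Suc M)) = s M"
      then have "Suc (Suc M) = M" using s unfolding is_ray_def by (simp add: inj_eq)
      then show False by simp
    qed
    then have "s (Suc (Suc M)) \<noteq> p (s (Suc M))" using step.IH by simp
    then show ?case using edge_parent[OF e2] by auto
  qed
  then show ?thesis unfolding down_from_def by blast
qed

lemma up_pow: assumes "up_ray s" shows "s i = (p ^^ i) (s 0)"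
proof (induction i)
  case 0 then show ?case by simp
next
  case (Suc i)
  have "s (Suc i) = p (s i)" using assms unfolding up_ray_def by blast
  then show ?case using Suc.IH by simp
qed

lemma up_TS:
  assumes s: "is_ray E s" and t: "is_ray E t" and "up_ray s" "up_ray t"
  shows "TS s t"
proof -
  obtain a b where ab: "(p ^^ a) (s 0) = (p ^^ b) (t 0)"
    using common_anc[OF ray_V[OF s] ray_V[OF t]] by blast
  have "s (a + i) = t (b + i)" for i
  proof -
    have "s (a + i) = (p ^^ (i + a)) (s 0)" using up_pow[OF assms(3), of "a + i"] by (simp add: add.commute)
    also have "\<dots> = (p ^^ i) ((p ^^ a) (s 0))" by (simp add: funpow_add)
    also have "\<dots> = (p ^^ i) ((p ^^ b) (t 0))" using ab by simp
    also have "\<dots> = (p ^^ (i + b)) (t 0)" by (simp add: funpow_add)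
    also have "\<dots> = t (b + i)" using up_pow[OF assms(4), of "b + i"] by (simp add: add.commute)
    finally show ?thesis .
  qed
  then show ?thesis unfolding TS_def by blast
qed

lemma down_pow:
  assumes "down_from s N" "N \<le> M" shows "(p ^^ i) (s (M + i)) = s M"
proof (induction i)
  case 0 then show ?case by simp
next
  case (Suc i)
  have "p (s (Suc (M + i))) = s (M + i)" using assms unfolding down_from_def by simp
  then have "(p ^^ Suc i) (s (M + Suc i)) = (p ^^ i) (s (M + i))"
    by (simp add: funpow_Suc_right del: funpow.simps)
  then show ?case using Suc.IH by simp
qed

lemma down_finite:
  assumes x: "x \<in> V" and d: "down_from s N"
  shows "finite {M. N \<le> M \<and> x \<in> Dset (s M)}"
proof (cases "{M. N \<le> M \<and> x \<in> Dset (s M)} = {}")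
  case True show ?thesis by (subst True) simp
next
  case False
  then obtain M0 n0 where M0: "N \<le> M0" "(p ^^ n0) x = s M0" unfolding Dset_def by blast
  have "{M. N \<le> M \<and> x \<in> Dset (s M)} \<subseteq> {..M0 + n0}"
  proof
    fix M assume "M \<in> {M. N \<le> M \<and> x \<in> Dset (s M)}"
    then obtain n where n: "N \<le> M" "(p ^^ n) x = s M" unfolding Dset_def by blast
    show "M \<in> {..M0 + n0}"
    proof (cases "M \<le> M0")
      case True then show ?thesis by simp
    next
      case False
      have "s M0 = (p ^^ (M - M0)) (s (M0 + (M - M0)))" using down_pow[OF d M0(1)] by simp
      also have "\<dots> = (p ^^ (M - M0)) ((p ^^ n) x)" using False n(2) by simp
      also have "\<dots> = (p ^^ (M - M0 + n)) x" by (simp add: funpow_add)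
      finally have "(p ^^ n0) x = (p ^^ (M - M0 + n)) x" using M0(2) by simp
      then have "n0 = M - M0 + n" using pow_inj[OF x] by blast
      then show ?thesis by simp
    qed
  qed
  then show ?thesis using finite_subset by blast
qed

lemma enter_D:
  assumes w: "is_walk E X" and h: "hd X \<notin> Dset v" and l: "last X \<in> Dset v"
  shows "v \<in> set X"
proof -
  have Xne: "X \<noteq> []" using w by (simp add: is_walk_def)
  define k where "k = (LEAST k. k < length X \<and> X ! k \<in> Dset v)"
  have ex: "length X - 1 < length X \<and> X ! (length X - 1) \<in> Dset v"
    using Xne l last_conv_nth[OF Xne] by simp
  have k: "k < length X" "X ! k \<in> Dset v"
    using LeastI[of "\<lambda>k. k < length X \<and> X ! k \<in> Dset v", OF ex] unfolding k_def by auto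
  have "k \<noteq> 0"
  proof
    assume "k = 0" then show False using k h Xne by (simp add: hd_conv_nth)
  qed
  then obtain k' where k': "k = Suc k'" by (cases k) auto
  have prev: "X ! k' \<notin> Dset v"
  proof -
    have "k' < k" using k' by simp
    then have "\<not> (k' < length X \<and> X ! k' \<in> Dset v)" unfolding k_def by (rule not_less_Least)
    then show ?thesis using k(1) k' by simp
  qed
  have "Suc k' < length X" using k(1) k' by simp
  then have e: "(X ! k', X ! Suc k') \<in> E" using w unfolding is_walk_def by blast
  obtain n where n: "(p ^^ n) (X ! k) = v" using k(2) unfolding Dset_def by blast
  from edge_parent[OF e] show ?thesis
  proof
    assume a: "X ! Suc k' = p (X ! k')"
    have "(p ^^ Suc n) (X ! k') = (p ^^ n) (p (X ! k'))" by (simp add: funpow_Suc_right del: funpow.simps)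
    also have "\<dots> = v" using n a k' by simp
    finally have "X ! k' \<in> Dset v" unfolding Dset_def by blast
    then show ?thesis using prev by simp
  next
    assume a: "X ! k' = p (X ! Suc k')"
    show ?thesis
    proof (cases n)
      case 0 then have "X ! k = v" using n by simp
      then show ?thesis using nth_mem[OF k(1)] by simp
    next
      case (Suc n')
      have "(p ^^ n') (X ! k') = (p ^^ n') (p (X ! k))" using a k' by simp
      also have "\<dots> = (p ^^ Suc n') (X ! k)" by (simp add: funpow_Suc_right del: funpow.simps)
      also have "\<dots> = v" using n Suc by simp
      finally have "X ! k' \<in> Dset v" unfolding Dset_def by blast
      then show ?thesis using prev by simp
    qed
  qed
qed

end

lemma paths_inj_last:
  assumes "\<forall>X\<in>P. is_path E X" "\<forall>X\<in>P. \<forall>Y\<in>P. X \<noteq> Y \<longrightarrow> set X \<inter> set Y = {}"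
  shows "inj_on last P"
proof (rule inj_onI)
  fix X Y assume XY: "X \<in> P" "Y \<in> P" "last X = last Y"
  have "X \<noteq> []" "Y \<noteq> []" using assms(1) XY by (auto simp: is_path_def is_walk_def)
  then have "last X \<in> set X \<inter> set Y" using XY(3) by (metis IntI last_in_set)
  then show "X = Y" using assms(2) XY by blast
qed

lemma paths_inj_hd:
  assumes "\<forall>X\<in>P. is_path E X" "\<forall>X\<in>P. \<forall>Y\<in>P. X \<noteq> Y \<longrightarrow> set X \<inter> set Y = {}"
  shows "inj_on hd P"
proof (rule inj_onI)
  fix X Y assume XY: "X \<in> P" "Y \<in> P" "hd X = hd Y"
  have "X \<noteq> []" "Y \<noteq> []" using assms(1) XY by (auto simp: is_path_def is_walk_def)
  then have "hd X \<in> set X \<inter> set Y" using XY(3) by (metis IntI hd_in_set)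
  then show "X = Y" using assms(2) XY by blast
qed

lemma finite_paths_end_in:
  assumes "\<forall>X\<in>P. is_path E X" "\<forall>X\<in>P. \<forall>Y\<in>P. X \<noteq> Y \<longrightarrow> set X \<inter> set Y = {}" "finite S"
  shows "finite {X\<in>P. last X \<in> S}" "finite {X\<in>P. hd X \<in> S}"
proof -
  have "inj_on last {X\<in>P. last X \<in> S}" using paths_inj_last[OF assms(1,2)] by (rule inj_on_subset) blast
  moreover have "last ` {X\<in>P. last X \<in> S} \<subseteq> S" by blast
  ultimately show "finite {X\<in>P. last X \<in> S}" using finite_subset[OF _ assms(3)] finite_imageD by blast
  have "inj_on hd {X\<in>P. hd X \<in> S}" using paths_inj_hd[OF assms(1,2)] by (rule inj_on_subset) blast
  moreover have "hd ` {X\<in>P. hd X \<in> S} \<subseteq> S" by blast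
  ultimately show "finite {X\<in>P. hd X \<in> S}" using finite_subset[OF _ assms(3)] finite_imageD by blast
qed

lemma ray_equiv_refl:
  assumes "is_ray E r" shows "ray_equiv E r r"
proof -
  let ?P = "(\<lambda>i. [r i]) ` UNIV"
  have ir: "inj r" using assms by (simp add: is_ray_def)
  have "inj (\<lambda>i. [r i])" using ir by (simp add: inj_def)
  then have "infinite ?P"
  proof -
    have "finite (UNIV :: nat set)" if "finite ?P" using finite_imageD[OF that \<open>inj (\<lambda>i. [r i])\<close>] .
    then show ?thesis by auto
  qed
  moreover have "\<forall>X\<in>?P. is_path E X \<and> hd X \<in> range r \<and> last X \<in> range r"
    by (auto simp: is_path_def)
  moreover have "\<forall>X\<in>?P. \<forall>Y\<in>?P. X \<noteq> Y \<longrightarrow> set X \<inter> set Y = {}" by auto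
  ultimately show ?thesis unfolding ray_equiv_def by blast
qed

lemma TS_ray_equiv:
  assumes "TS r1 r2" "ray_equiv E r1 s" shows "ray_equiv E r2 s"
proof -
  obtain a b where ab: "\<And>i. r1 (a + i) = r2 (b + i)" using assms(1) unfolding TS_def by blast
  obtain P where P: "infinite P" "\<forall>X\<in>P. is_path E X \<and> hd X \<in> range r1 \<and> last X \<in> range s"
    "\<forall>X\<in>P. \<forall>Y\<in>P. X \<noteq> Y \<longrightarrow> set X \<inter> set Y = {}"
    using assms(2) unfolding ray_equiv_def by blast
  let ?P' = "{X\<in>P. hd X \<in> range r2}"
  have "P - ?P' \<subseteq> {X\<in>P. hd X \<in> r1 ` {..<a}}"
  proof
    fix X assume X: "X \<in> P - ?P'"
    then obtain k where k: "hd X = r1 k" using P(2) by blast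
    have "k < a"
    proof (rule ccontr)
      assume "\<not> k < a"
      then have "r1 k = r2 (b + (k - a))" using ab[of "k - a"] by simp
      then have "hd X \<in> range r2" using k by simp
      then show False using X by blast
    qed
    then show "X \<in> {X\<in>P. hd X \<in> r1 ` {..<a}}" using X k by blast
  qed
  moreover have "finite {X\<in>P. hd X \<in> r1 ` {..<a}}"
    using finite_paths_end_in(2)[of P E "r1 ` {..<a}"] P by auto
  ultimately have "finite (P - ?P')" using finite_subset by blast
  have "infinite ?P'"
  proof
    assume "finite ?P'"
    then have "finite ((P - ?P') \<union> ?P')" using \<open>finite (P - ?P')\<close> by simp
    moreover have "(P - ?P') \<union> ?P' = P" by blast
    ultimately show False using P(1) by simp
  qed
  moreover have "\<forall>X\<in>?P'. is_path E X \<and> hd X \<in> range r2 \<and> last X \<in> range s" using P(2) by blast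
  moreover have "\<forall>X\<in>?P'. \<forall>Y\<in>?P'. X \<noteq> Y \<longrightarrow> set X \<inter> set Y = {}" using P(3) by blast
  ultimately show ?thesis unfolding ray_equiv_def by blast
qed

lemma TS_end_eq:
  assumes "TS r1 r2" shows "end_of E r1 = end_of E r2"
  using TS_ray_equiv[OF assms] TS_ray_equiv[OF TS_sym[OF assms]] unfolding end_of_def by blast


context tree_end
begin

lemma r0_upray: "up_ray r0"
  unfolding up_ray_def
proof
  fix i
  have "r0 (Suc i) = (p ^^ Suc i) (r0 0)" using r0_up[of "Suc i"] by simp
  also have "\<dots> = p ((p ^^ i) (r0 0))" by simp
  also have "\<dots> = p (r0 i)" using r0_up[of i] by simp
  finally show "r0 (Suc i) = p (r0 i)" .
qed

lemma two_elems:
  assumes "infinite Q" obtains X Y where "X \<in> Q" "Y \<in> Q" "X \<noteq> Y"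
proof -
  obtain X where X: "X \<in> Q" using assms infinite_imp_nonempty by blast
  have "infinite (Q - {X})" using assms by simp
  then obtain Y where "Y \<in> Q - {X}" using infinite_imp_nonempty by blast
  then show ?thesis using that X by blast
qed

lemma K_r0:
  assumes s: "is_ray E s" and eq: "ray_equiv E r0 s"
  shows "TS s r0"
proof (cases "up_ray s")
  case True then show ?thesis using up_TS[OF s r0 True r0_upray] by simp
next
  case False
  then obtain N where d: "down_from s N" using ray_up_or_down[OF s] by blast
  have fin: "finite {M. N \<le> M \<and> r0 0 \<in> Dset (s M)}"
    using down_finite[OF ray_V[OF r0] d] .
  have "infinite {M. N \<le> M}" using infinite_Ici[of N] by (simp add: atLeast_def)
  then have "infinite ({M. N \<le> M} - {M. N \<le> M \<and> r0 0 \<in> Dset (s M)})"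
    using fin by (rule Diff_infinite_finite[rotated])
  then obtain M where M: "N \<le> M" "r0 0 \<notin> Dset (s M)"
    using infinite_imp_nonempty by blast
  have notD: "r0 i \<notin> Dset (s M)" for i
  proof
    assume "r0 i \<in> Dset (s M)"
    then obtain n where n: "(p ^^ n) (r0 i) = s M" unfolding Dset_def by blast
    have "(p ^^ (n + i)) (r0 0) = (p ^^ n) ((p ^^ i) (r0 0))" by (simp add: funpow_add)
    also have "\<dots> = s M" using n r0_up[of i] by simp
    finally show False using M(2) unfolding Dset_def by blast
  qed
  obtain P where P: "infinite P" "\<forall>X\<in>P. is_path E X \<and> hd X \<in> range r0 \<and> last X \<in> range s"
    "\<forall>X\<in>P. \<forall>Y\<in>P. X \<noteq> Y \<longrightarrow> set X \<inter> set Y = {}"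
    using eq unfolding ray_equiv_def by blast
  have Ppath: "\<forall>X\<in>P. is_path E X" using P(2) by blast
  have finP1: "finite {X\<in>P. last X \<in> s ` {..<M}}"
    using finite_paths_end_in(1)[OF Ppath P(3)] by simp
  let ?Q = "P - {X\<in>P. last X \<in> s ` {..<M}}"
  have Qinf: "infinite ?Q" using P(1) finP1 by (rule Diff_infinite_finite[rotated])
  have inQ: "s M \<in> set X" if X: "X \<in> ?Q" for X
  proof -
    have XP: "X \<in> P" using X by blast
    obtain i where i: "hd X = r0 i" using P(2) XP by blast
    obtain j where j: "last X = s j" using P(2) XP by blast
    have "j \<ge> M"
    proof (rule ccontr)
      assume "\<not> j \<ge> M"
      then have "last X \<in> s ` {..<M}" using j by simp
      then show False using X by blast
    qed
    have "(p ^^ (j - M)) (s (M + (j - M))) = s M" using down_pow[OF d M(1)] .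
    then have "last X \<in> Dset (s M)" using j \<open>j \<ge> M\<close> unfolding Dset_def by auto
    moreover have "hd X \<notin> Dset (s M)" using i notD by simp
    moreover have "is_walk E X" using Ppath XP by (simp add: is_path_def)
    ultimately show ?thesis using enter_D by blast
  qed
  obtain X Y where XY: "X \<in> ?Q" "Y \<in> ?Q" "X \<noteq> Y" using two_elems[OF Qinf] by blast
  have "s M \<in> set X \<inter> set Y" using inQ[OF XY(1)] inQ[OF XY(2)] by blast
  moreover have "set X \<inter> set Y = {}" using P(3) XY by blast
  ultimately show ?thesis by blast
qed

lemma inf_inter_TS:
  assumes r: "is_ray E r" and s: "is_ray E s" and inf: "infinite (range r \<inter> range s)"
  shows "TS r s"
proof -
  let ?I = "{i. r i \<in> range s}"
  have ir: "inj r" using r by (simp add: is_ray_def)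
  have "range r \<inter> range s \<subseteq> r ` ?I" by blast
  have Iinf: "infinite ?I"
  proof
    assume "finite ?I"
    then have "finite (r ` ?I)" by simp
    then have "finite (range r \<inter> range s)" using \<open>range r \<inter> range s \<subseteq> r ` ?I\<close> finite_subset by blast
    then show False using inf by simp
  qed
  then obtain i0 where "i0 \<in> ?I" using infinite_imp_nonempty by blast
  then obtain j0 where ij0: "r i0 = s j0" by blast
  have "r (i0 + t) = s (j0 + t)" for t
  proof -
    have f2: "finite (r -` (s ` {..j0}))" by (rule finite_vimageI) (use ir in auto)
    have "infinite (?I - {..i0+t})" using Iinf by (rule Diff_infinite_finite[rotated]) simp
    then have "infinite (?I - {..i0+t} - r -` (s ` {..j0}))"
      using f2 by (rule Diff_infinite_finite[rotated])
    then obtain i1 where "i1 \<in> ?I - {..i0+t} - r -` (s ` {..j0})"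
      using infinite_imp_nonempty by blast
    then have i1: "i1 \<in> ?I" "i1 > i0 + t" "r i1 \<notin> s ` {..j0}" by auto
    obtain j1 where j1: "r i1 = s j1" using i1(1) by blast
    have "j1 > j0"
    proof (rule ccontr)
      assume "\<not> j1 > j0" then have "r i1 \<in> s ` {..j0}" using j1 by simp
      then show False using i1(3) by blast
    qed
    have eq: "map r [i0..<Suc i1] = map s [j0..<Suc j1]"
    proof (rule unique_path)
      show "is_path E (map r [i0..<Suc i1])" by (rule ray_path_seg[OF r]) (use i1(2) in simp)
      show "is_path E (map s [j0..<Suc j1])" by (rule ray_path_seg[OF s]) (use \<open>j1 > j0\<close> in simp)
      have "hd (map r [i0..<Suc i1]) = r i0" using i1(2) by (simp add: upt_conv_Cons del: upt_Suc)
      moreover have "hd (map s [j0..<Suc j1]) = s j0" using \<open>j1 > j0\<close> by (simp add: upt_conv_Cons del: upt_Suc)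
      ultimately show "hd (map r [i0..<Suc i1]) = hd (map s [j0..<Suc j1])" using ij0 by simp
      have "last (map r [i0..<Suc i1]) = r i1" using i1(2) by simp
      moreover have "last (map s [j0..<Suc j1]) = s j1" using \<open>j1 > j0\<close> by simp
      ultimately show "last (map r [i0..<Suc i1]) = last (map s [j0..<Suc j1])" using j1 by simp
    qed
    then have "length (map r [i0..<Suc i1]) = length (map s [j0..<Suc j1])" by (simp only:)
    then have len: "Suc i1 - i0 = Suc j1 - j0" by (simp only: length_map length_upt)
    have t1: "t < Suc i1 - i0" using i1(2) by simp
    then have t2: "t < Suc j1 - j0" using len by simp
    have "map r [i0..<Suc i1] ! t = r (i0 + t)" using t1 by (simp del: upt_Suc)
    moreover have "map s [j0..<Suc j1] ! t = s (j0 + t)" using t2 by (simp del: upt_Suc)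
    ultimately show ?thesis using eq by simp
  qed
  then show ?thesis unfolding TS_def by blast
qed

lemma common_anc_set:
  assumes "finite S" "S \<subseteq> V" shows "\<exists>m\<in>V. \<forall>x\<in>S. \<exists>c. (p ^^ c) x = m"
  using assms
proof (induction S rule: finite_induct)
  case empty
  have "r0 0 \<in> V" using ray_V[OF r0] .
  then show ?case by blast
next
  case (insert y S)
  have SV: "S \<subseteq> V" and yV: "y \<in> V" using insert.prems by auto
  obtain m where m: "m \<in> V" "\<forall>x\<in>S. \<exists>c. (p ^^ c) x = m" using insert.IH[OF SV] by blast
  obtain a b where ab: "(p ^^ a) y = (p ^^ b) m" using common_anc[OF yV m(1)] by blast
  have all: "\<forall>x\<in>insert y S. \<exists>c. (p ^^ c) x = (p ^^ b) m"
  proof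
    fix x assume x: "x \<in> insert y S"
    show "\<exists>c. (p ^^ c) x = (p ^^ b) m"
    proof (cases "x = y")
      case True then show ?thesis using ab by blast
    next
      case False
      then have "x \<in> S" using x by simp
      then obtain c where c: "(p ^^ c) x = m" using m(2) by blast
      have "(p ^^ (b + c)) x = (p ^^ b) ((p ^^ c) x)" by (simp add: funpow_add)
      also have "\<dots> = (p ^^ b) m" using c by simp
      finally show ?thesis by blast
    qed
  qed
  moreover have "(p ^^ b) m \<in> V" using pow_V[OF m(1)] .
  ultimately show ?case by blast
qed

end

theorem lemma4p2:
  fixes G :: "('g, 'b) monoid_scheme" and V :: "'v set" and E :: "('v \<times> 'v) set"
    and \<phi> :: "'g \<Rightarrow> 'v \<Rightarrow> 'v"
  assumes "group G"
    and "tree_action G V E \<phi>"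
    and "quasi_transitive G V \<phi>"
    and "infinite (ends E)"
    and "stabilizes_an_end G E \<phi>"
  shows "\<not> free_action G V \<phi>"
proof
  assume free: "free_action G V \<phi>"
  have tree: "is_tree V E" and ga: "group_action G V \<phi>"
    and pres: "\<forall>g\<in>carrier G. \<forall>x\<in>V. \<forall>y\<in>V. (x, y) \<in> E \<longleftrightarrow> (\<phi> g x, \<phi> g y) \<in> E"
    using assms(2) unfolding tree_action_def by auto
  obtain \<omega> where \<omega>: "\<omega> \<in> ends E" and stab: "\<forall>g\<in>carrier G. \<forall>r\<in>\<omega>. (\<phi> g \<circ> r) \<in> \<omega>"
    using assms(5) unfolding stabilizes_an_end_def by blast
  obtain r0 where r0: "is_ray E r0" and \<omega>r0: "\<omega> = end_of E r0"
    using \<omega> unfolding ends_def by blast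
  interpret T: tree_end E V r0
  proof unfold_locales
    show "sym E" "irrefl E" "\<nexists>c. is_cycle E c" "E \<subseteq> V \<times> V"
      "\<forall>x\<in>V. \<forall>y\<in>V. \<exists>p. is_path E p \<and> hd p = x \<and> last p = y"
      using tree unfolding is_tree_def by auto
    show "is_ray E r0" by (rule r0)
  qed
  interpret GA: group_action G V \<phi> by (rule ga)
  have r0\<omega>: "r0 \<in> \<omega>" unfolding \<omega>r0 end_of_def using r0 ray_equiv_refl[OF r0] by blast
  have equiv: "T.p (\<phi> g v) = \<phi> g (T.p v)" if g: "g \<in> carrier G" and v: "v \<in> V" for g v
  proof -
    have "\<phi> g \<circ> r0 \<in> \<omega>" using stab g r0\<omega> by blast
    then have gr0: "is_ray E (\<phi> g \<circ> r0)" "ray_equiv E r0 (\<phi> g \<circ> r0)"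
      unfolding \<omega>r0 end_of_def by auto
    have TSg: "TS (\<phi> g \<circ> r0) r0" using T.K_r0[OF gr0] .
    let ?t = "\<phi> g \<circ> T.sr v"
    have srv: "is_ray E (T.sr v)" "T.sr v 0 = v" "TS (T.sr v) r0" using T.sr[OF v] by auto
    have srV: "T.sr v i \<in> V" for i using T.sr_V[OF v] .
    have "is_ray E ?t" unfolding is_ray_def
    proof
      have "range (T.sr v) \<subseteq> V" using srV by blast
      then have "inj_on (\<phi> g) (range (T.sr v))"
        by (rule inj_on_subset[OF GA.inj_prop[OF g]])
      then show "inj ?t" using srv(1) unfolding is_ray_def by (simp add: comp_inj_on)
      show "\<forall>i. (?t i, ?t (Suc i)) \<in> E"
      proof
        fix i
        have "(T.sr v i, T.sr v (Suc i)) \<in> E" using srv(1) unfolding is_ray_def by blast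
        then show "(?t i, ?t (Suc i)) \<in> E" using pres g srV by simp
      qed
    qed
    moreover have "?t 0 = \<phi> g v" using srv(2) by simp
    moreover have "TS ?t r0" using TS_trans[OF TS_map[OF srv(3)] TSg] .
    moreover have gv: "\<phi> g v \<in> V" using GA.element_image[OF g v refl] .
    ultimately have "T.sr (\<phi> g v) = ?t" using T.sr_eq by blast
    then show ?thesis unfolding T.p_def by simp
  qed
  have equiv_pow: "(T.p ^^ n) (\<phi> g v) = \<phi> g ((T.p ^^ n) v)" if g: "g \<in> carrier G" and v: "v \<in> V" for g v n
  proof (induction n)
    case 0 then show ?case by simp
  next
    case (Suc n)
    have "(T.p ^^ Suc n) (\<phi> g v) = T.p ((T.p ^^ n) (\<phi> g v))" by simp
    also have "\<dots> = T.p (\<phi> g ((T.p ^^ n) v))" using Suc.IH by simp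
    also have "\<dots> = \<phi> g (T.p ((T.p ^^ n) v))" using equiv[OF g T.pow_V[OF v]] .
    finally show ?case by simp
  qed
  define k where "k = card (orbits G V \<phi>)"
  have finO: "finite (orbits G V \<phi>)" using assms(3) unfolding quasi_transitive_def .
  obtain F where F: "F \<subseteq> ends E" "finite F" "card F = k + 2"
    using infinite_arbitrarily_large[OF assms(4)] by blast
  define R where "R e = (SOME r. is_ray E r \<and> e = end_of E r)" for e
  have R: "is_ray E (R e) \<and> e = end_of E (R e)" if "e \<in> ends E" for e
  proof -
    have "\<exists>r. is_ray E r \<and> e = end_of E r" using that unfolding ends_def by blast
    then show ?thesis unfolding R_def by (rule someI_ex)
  qed
  have RnotTS: "\<not> TS (R e1) (R e2)" if "e1 \<in> F" "e2 \<in> F" "e1 \<noteq> e2" for e1 e2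
  proof
    assume "TS (R e1) (R e2)"
    then have "end_of E (R e1) = end_of E (R e2)" by (rule TS_end_eq)
    moreover have "e1 = end_of E (R e1)" "e2 = end_of E (R e2)" using R that(1,2) F(1) by auto
    ultimately show False using that(3) by simp
  qed
  have Rfin: "finite (range (R e1) \<inter> range (R e2))" if "e1 \<in> F" "e2 \<in> F" "e1 \<noteq> e2" for e1 e2
  proof (rule ccontr)
    assume "infinite (range (R e1) \<inter> range (R e2))"
    moreover have "is_ray E (R e1)" "is_ray E (R e2)" using R that(1,2) F(1) by auto
    ultimately have "TS (R e1) (R e2)" using T.inf_inter_TS by blast
    then show False using RnotTS that by blast
  qed
  define Fu where "Fu = {e\<in>F. T.up_ray (R e)}"
  have "card Fu \<le> Suc 0"
  proof -
    have "finite Fu" unfolding Fu_def using F(2) by simp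
    moreover have "\<forall>a1\<in>Fu. \<forall>a2\<in>Fu. a1 = a2"
    proof (intro ballI)
      fix a1 a2 assume a: "a1 \<in> Fu" "a2 \<in> Fu"
      show "a1 = a2"
      proof (rule ccontr)
        assume ne: "a1 \<noteq> a2"
        have "is_ray E (R a1)" "is_ray E (R a2)" using R a F(1) unfolding Fu_def by auto
        moreover have "T.up_ray (R a1)" "T.up_ray (R a2)" using a unfolding Fu_def by auto
        ultimately have "TS (R a1) (R a2)" by (rule T.up_TS)
        then show False using RnotTS a ne unfolding Fu_def by blast
      qed
    qed
    ultimately show ?thesis using card_le_Suc0_iff_eq by blast
  qed
  define F' where "F' = F - Fu"
  have finF': "finite F'" unfolding F'_def using F(2) by simp
  have cardF': "card F' \<ge> k + 1"
  proof -
    have "card F' = card F - card Fu" unfolding F'_def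
      by (rule card_Diff_subset) (use F(2) in \<open>auto simp: Fu_def\<close>)
    then show ?thesis using F(3) \<open>card Fu \<le> Suc 0\<close> by simp
  qed
  have F'sub: "F' \<subseteq> F" unfolding F'_def by blast
  have Rray: "is_ray E (R e)" if "e \<in> F'" for e
  proof -
    have "e \<in> ends E" using that F'sub F(1) by blast
    then show ?thesis using R by blast
  qed
  have down: "\<exists>N. T.down_from (R e) N" if "e \<in> F'" for e
  proof -
    have "\<not> T.up_ray (R e)" using that unfolding F'_def Fu_def by blast
    then show ?thesis using T.ray_up_or_down[OF Rray[OF that]] by blast
  qed
  define N where "N e = (SOME N. T.down_from (R e) N)" for e
  have Nd: "T.down_from (R e) (N e)" if "e \<in> F'" for e
    unfolding N_def using down[OF that] by (rule someI_ex)
  define b where "b e = R e (N e)" for e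
  have bV: "b ` F' \<subseteq> V"
  proof
    fix x assume "x \<in> b ` F'"
    then obtain e where "e \<in> F'" "x = b e" by blast
    then show "x \<in> V" unfolding b_def using T.ray_V[OF Rray] by blast
  qed
  obtain m where m: "m \<in> V" "\<forall>x\<in>b ` F'. \<exists>c. (T.p ^^ c) x = m"
    using T.common_anc_set[OF finite_imageI[OF finF'] bV] by blast
  define c where "c e = (SOME c. (T.p ^^ c) (b e) = m)" for e
  have c: "(T.p ^^ c e) (b e) = m" if "e \<in> F'" for e
  proof -
    have "b e \<in> b ` F'" using that by blast
    then have "\<exists>c. (T.p ^^ c) (b e) = m" using m(2) by blast
    then show ?thesis unfolding c_def by (rule someI_ex)
  qed
  define C where "C = Max (c ` F')"
  have cC: "c e \<le> C" if "e \<in> F'" for e unfolding C_def using finF' that by simp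
  define Bad where "Bad = (\<Union>e1\<in>F'. \<Union>e2\<in>F' - {e1}.
      {n. C \<le> n \<and> R e1 (N e1 + (n - c e1)) = R e2 (N e2 + (n - c e2))})"
  have finBad: "finite Bad" unfolding Bad_def
  proof (intro finite_UN_I finF' finite_Diff)
    fix e1 e2 assume e1: "e1 \<in> F'" and e2: "e2 \<in> F' - {e1}"
    let ?S = "{n. C \<le> n \<and> R e1 (N e1 + (n - c e1)) = R e2 (N e2 + (n - c e2))}"
    let ?f = "\<lambda>n. R e1 (N e1 + (n - c e1))"
    have "inj_on ?f ?S"
    proof (rule inj_onI)
      fix n n' assume nn: "n \<in> ?S" "n' \<in> ?S" "?f n = ?f n'"
      have "inj (R e1)" using Rray[OF e1] by (simp add: is_ray_def)
      then have "N e1 + (n - c e1) = N e1 + (n' - c e1)" using nn(3) by (simp add: inj_eq)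
      moreover have "C \<le> n" "C \<le> n'" using nn(1,2) by auto
      ultimately show "n = n'" using cC[OF e1] by linarith
    qed
    moreover have "?f ` ?S \<subseteq> range (R e1) \<inter> range (R e2)"
    proof
      fix y assume "y \<in> ?f ` ?S"
      then obtain n where "n \<in> ?S" "y = ?f n" by blast
      then have "y = R e1 (N e1 + (n - c e1))" "y = R e2 (N e2 + (n - c e2))" by auto
      then show "y \<in> range (R e1) \<inter> range (R e2)" by blast
    qed
    moreover have "finite (range (R e1) \<inter> range (R e2))"
      using Rfin e1 e2 F'sub by blast
    ultimately have "finite (?f ` ?S)" using finite_subset by blast
    then show "finite ?S" using \<open>inj_on ?f ?S\<close> by (rule finite_imageD)
  qed
  have "infinite {n. C \<le> n}" using infinite_Ici[of C] by (simp add: atLeast_def)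
  then have "infinite ({n. C \<le> n} - Bad)" using finBad by (rule Diff_infinite_finite[rotated])
  then obtain n where n: "C \<le> n" "n \<notin> Bad" using infinite_imp_nonempty by blast
  define xf where "xf e = R e (N e + (n - c e))" for e
  have inj_x: "inj_on xf F'"
  proof (rule inj_onI)
    fix e1 e2 assume e: "e1 \<in> F'" "e2 \<in> F'" "xf e1 = xf e2"
    show "e1 = e2"
    proof (rule ccontr)
      assume "e1 \<noteq> e2"
      then have "n \<in> Bad" unfolding Bad_def using e n(1) unfolding xf_def by blast
      then show False using n(2) by blast
    qed
  qed
  let ?X = "xf ` F'"
  have cardX: "card ?X \<ge> k + 1" using card_image[OF inj_x] cardF' by simp
  have XV: "?X \<subseteq> V"
  proof
    fix x assume "x \<in> ?X"
    then obtain e where "e \<in> F'" "x = xf e" by blast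
    then show "x \<in> V" unfolding xf_def using T.ray_V[OF Rray] by blast
  qed
  have Xm: "(T.p ^^ n) v = m" if vX: "v \<in> ?X" for v
  proof -
    obtain e where e: "e \<in> F'" "v = xf e" using vX by blast
    have "n = c e + (n - c e)" using cC[OF e(1)] n(1) by simp
    then have "(T.p ^^ n) v = (T.p ^^ (c e + (n - c e))) v" by simp
    also have "\<dots> = (T.p ^^ c e) ((T.p ^^ (n - c e)) v)" by (simp only: funpow_add comp_apply)
    finally have "(T.p ^^ n) v = (T.p ^^ c e) ((T.p ^^ (n - c e)) v)" .
    also have "(T.p ^^ (n - c e)) v = b e"
      unfolding e(2) xf_def b_def using T.down_pow[OF Nd[OF e(1)] le_refl] .
    finally show ?thesis using c[OF e(1)] by simp
  qed
  have "\<not> inj_on (orbit G \<phi>) ?X"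
  proof
    assume inj: "inj_on (orbit G \<phi>) ?X"
    have "orbit G \<phi> ` ?X \<subseteq> orbits G V \<phi>" using XV unfolding orbits_def by blast
    then have "card ?X \<le> card (orbits G V \<phi>)" using card_inj_on_le[OF inj _ finO] by blast
    then show False using cardX unfolding k_def by simp
  qed
  then obtain a a' where aa: "a \<in> ?X" "a' \<in> ?X" "a \<noteq> a'" "orbit G \<phi> a = orbit G \<phi> a'"
    unfolding inj_on_def by blast
  have aV: "a \<in> V" "a' \<in> V" using aa XV by auto
  have "a' \<in> orbit G \<phi> a" using GA.orbit_refl[OF aV(2)] aa(4) by simp
  then obtain g where g: "g \<in> carrier G" "a' = \<phi> g a" unfolding orbit_def by blast
  have "m = (T.p ^^ n) a'" using Xm[OF aa(2)] by simp
  also have "\<dots> = \<phi> g ((T.p ^^ n) a)" using g equiv_pow[OF g(1) aV(1)] by simp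
  also have "\<dots> = \<phi> g m" using Xm[OF aa(1)] by simp
  finally have "\<phi> g m = m" by simp
  then have "g = \<one>\<^bsub>G\<^esub>" using free g(1) m(1) unfolding free_action_def by blast
  moreover have "\<phi> \<one>\<^bsub>G\<^esub> a = a" using GA.id_eq_one[symmetric] aV(1) by simp
  ultimately have "a' = a" using g(2) by simp
  then show False using aa(3) by simp
qed

end
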